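(* Let $G=\langle A\cup B\rangle$ be a CS group with $|X|\ge2$ whose rooted group $A$ is perfect and contains an element $a$ acting transitively on $X$. Then $G$ is not orbitwise-abelian, and for every generating set $S$ of $B$ the dynamical system $\Sigma_S$ is not eventually trivial; more precisely $A\subseteq\sigma_S(a,0)$, so $a\in\Sigma_S^k(\{a\})$ for all $k\ge1$.
   Context: Let $X$ be a nonempty set with distinguished letter $0$, $\dot X=X\setminus\{0\}$; $X^*$ is the free monoid on $X$ viewed as a rooted tree; $\mathrm{Aut}(X^* )$ acts on the right; sections are defined by $(u\star v).g=u.g\star v.(g|_u)$; elements of $\mathrm{Sym}(X)$ are rooted automorphisms; $\mathrm{St}(1)$ is the first layer stabiliser. A CS group is $G=\langle A\cup B\rangle$ with $A\le\mathrm{Sym}(X)$ transitive and $B\le\mathrm{St}(1)$ such that $b|_0=b$ for $b\in B$ and the $b|_x$ ($b\in B$, $x\in\dot X$) lie in $A$ and generate $A$. $\mathrm{st}_A(0)$ is the stabiliser of $0$; $\mathrm{orb}_c(0)$ the $\langle c\rangle$-orbit of $0$, $\ell_c(0)$ its length. $G$ is orbitwise-abelian if for every $a\in A$ the group $\langle b|_{0.c}:c\in\langle a\rangle\setminus\mathrm{st}_A(0),b\in B\rangle$ is abelian. $\mathrm{mp}_A(0,x)=\{c\in A:0.c=x\}$; $\mathfrak C(a,x)=\{cac^{-1}:c\in\mathrm{mp}_A(0,x)\}$; $\mathfrak X(a,x)=\bigcup_{c\in\mathfrak C(a,x)}\mathrm{orb}_c(0)\setminus\{0\}$. For $S\subseteq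 B$: $H_S(a,x)=\langle b|_y:y\in\mathfrak X(a,x),b\in S\rangle$, $\sigma_S(a,x)=\langle b|_{0.c}b|_{0.c^2}\cdots b|_{0.c^{\ell_c(0)-1}}:c\in\mathfrak C(a,x),b\in S\rangle\cdot H_S(a,x)'$ (derived subgroup), $\Sigma_S(P)=\bigcup_{a\in P}\bigcup_{x\in X}\sigma_S(a,x)$; eventually trivial: for every $a$ there is $n$ with $\Sigma_S^m(\{a\})\subseteq\{1_A\}$ for all $m>n$. *)

theory Defs
  imports "HOL-Algebra.Algebra"
begin

(* The alphabet X is the (finite) type 'x; words X^* are lists; tree automorphisms
   are length- and prefix-preserving bijections of 'x list.  Action is on the right,
   so the group product g \<otimes> h means "first g, then h", i.e. h \<circ> g. *)

definition tree_aut :: "('x list \<Rightarrow> 'x list) \<Rightarrow> bool" where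
  "tree_aut g \<longleftrightarrow> bij g \<and> (\<forall>u. length (g u) = length u)
     \<and> (\<forall>u v. take (length u) (g (u @ v)) = g u)"

definition AutT :: "('x list \<Rightarrow> 'x list) monoid" where
  "AutT = \<lparr>carrier = {g. tree_aut g}, monoid.mult = (\<lambda>g h. h \<circ> g), one = id\<rparr>"

(* section g|_u, defined by (u v).g = u.g (v.(g|_u)) *)
definition sect :: "('x list \<Rightarrow> 'x list) \<Rightarrow> 'x list \<Rightarrow> ('x list \<Rightarrow> 'x list)" where
  "sect g u = (\<lambda>v. drop (length u) (g (u @ v)))"

definition lact :: "'x \<Rightarrow> ('x list \<Rightarrow> 'x list) \<Rightarrow> 'x" where
  "lact x g = hd (g [x])"

(* rooted automorphisms = Sym(X) embedded in Aut(X^* ) *)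
definition rooted :: "('x list \<Rightarrow> 'x list) \<Rightarrow> bool" where
  "rooted g \<longleftrightarrow> tree_aut g \<and> (\<forall>x w. g (x # w) = lact x g # w)"

definition St1 :: "('x list \<Rightarrow> 'x list) set" where
  "St1 = {g. tree_aut g \<and> (\<forall>x. g [x] = [x])}"

definition CS_group :: "'x \<Rightarrow> ('x list \<Rightarrow> 'x list) set \<Rightarrow> ('x list \<Rightarrow> 'x list) set \<Rightarrow> bool" where
  "CS_group x0 A B \<longleftrightarrow>
     subgroup A AutT \<and> (\<forall>g\<in>A. rooted g) \<and> (\<forall>x y. \<exists>c\<in>A. lact x c = y) \<and>
     subgroup B AutT \<and> B \<subseteq> St1 \<and>
     (\<forall>b\<in>B. sect b [x0] = b) \<and>
     (\<forall>b\<in>B. \<forall>x. x \<noteq> x0 \<longrightarrow> sect b [x] \<in> A) \<and>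
     generate AutT {sect b [x] | b x. b \<in> B \<and> x \<noteq> x0} = A"

definition stA :: "'x \<Rightarrow> ('x list \<Rightarrow> 'x list) set \<Rightarrow> ('x list \<Rightarrow> 'x list) set" where
  "stA x0 A = {c \<in> A. lact x0 c = x0}"

definition orb :: "('x list \<Rightarrow> 'x list) \<Rightarrow> 'x \<Rightarrow> 'x set" where
  "orb c x0 = {lact x0 (c [^]\<^bsub>AutT\<^esub> (n::int)) | n. True}"

definition ell :: "('x list \<Rightarrow> 'x list) \<Rightarrow> 'x \<Rightarrow> nat" where
  "ell c x0 = card (orb c x0)"

definition orbitwise_abelian :: "'x \<Rightarrow> ('x list \<Rightarrow> 'x list) set \<Rightarrow> ('x list \<Rightarrow> 'x list) set \<Rightarrow> bool" where
  "orbitwise_abelian x0 A B \<longleftrightarrow>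
     (\<forall>a\<in>A. let K = generate AutT {sect b [lact x0 c] | b c.
                  c \<in> generate AutT {a} - stA x0 A \<and> b \<in> B}
             in \<forall>g\<in>K. \<forall>h\<in>K. g \<otimes>\<^bsub>AutT\<^esub> h = h \<otimes>\<^bsub>AutT\<^esub> g)"

definition mpA :: "'x \<Rightarrow> ('x list \<Rightarrow> 'x list) set \<Rightarrow> 'x \<Rightarrow> ('x list \<Rightarrow> 'x list) set" where
  "mpA x0 A x = {c \<in> A. lact x0 c = x}"

definition Cset :: "'x \<Rightarrow> ('x list \<Rightarrow> 'x list) set \<Rightarrow> ('x list \<Rightarrow> 'x list) \<Rightarrow> 'x \<Rightarrow> ('x list \<Rightarrow> 'x list) set" where
  "Cset x0 A a x = {c \<otimes>\<^bsub>AutT\<^esub> a \<otimes>\<^bsub>AutT\<^esub> inv\<^bsub>AutT\<^esub> c | c. c \<in> mpA x0 A x}"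

definition Xset :: "'x \<Rightarrow> ('x list \<Rightarrow> 'x list) set \<Rightarrow> ('x list \<Rightarrow> 'x list) \<Rightarrow> 'x \<Rightarrow> 'x set" where
  "Xset x0 A a x = (\<Union>c\<in>Cset x0 A a x. orb c x0 - {x0})"

definition HS :: "'x \<Rightarrow> ('x list \<Rightarrow> 'x list) set \<Rightarrow> ('x list \<Rightarrow> 'x list) set \<Rightarrow> ('x list \<Rightarrow> 'x list) \<Rightarrow> 'x \<Rightarrow> ('x list \<Rightarrow> 'x list) set" where
  "HS x0 A S a x = generate AutT {sect b [y] | y b. y \<in> Xset x0 A a x \<and> b \<in> S}"

definition orbprod :: "'x \<Rightarrow> ('x list \<Rightarrow> 'x list) \<Rightarrow> ('x list \<Rightarrow> 'x list) \<Rightarrow> ('x list \<Rightarrow> 'x list)" where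
  "orbprod x0 c b = foldl (\<lambda>acc i. acc \<otimes>\<^bsub>AutT\<^esub> sect b [lact x0 (c [^]\<^bsub>AutT\<^esub> (i::nat))])
                      \<one>\<^bsub>AutT\<^esub> [1..<ell c x0]"

definition sigmaS :: "'x \<Rightarrow> ('x list \<Rightarrow> 'x list) set \<Rightarrow> ('x list \<Rightarrow> 'x list) set \<Rightarrow> ('x list \<Rightarrow> 'x list) \<Rightarrow> 'x \<Rightarrow> ('x list \<Rightarrow> 'x list) set" where
  "sigmaS x0 A S a x =
     generate AutT {orbprod x0 c b | c b. c \<in> Cset x0 A a x \<and> b \<in> S}
       <#>\<^bsub>AutT\<^esub> derived AutT (HS x0 A S a x)"

definition SigmaS :: "'x \<Rightarrow> ('x list \<Rightarrow> 'x list) set \<Rightarrow> ('x list \<Rightarrow> 'x list) set \<Rightarrow> ('x list \<Rightarrow> 'x list) set \<Rightarrow> ('x list \<Rightarrow> 'x list) set" where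
  "SigmaS x0 A S P = (\<Union>a\<in>P. \<Union>x. sigmaS x0 A S a x)"

definition eventually_trivial :: "'x \<Rightarrow> ('x list \<Rightarrow> 'x list) set \<Rightarrow> ('x list \<Rightarrow> 'x list) set \<Rightarrow> bool" where
  "eventually_trivial x0 A S \<longleftrightarrow>
     (\<forall>a\<in>A. \<exists>n. \<forall>m>n. (SigmaS x0 A S ^^ m) {a} \<subseteq> {\<one>\<^bsub>AutT\<^esub>})"

end

theory Submission
  imports Defs
begin

lemma tree_aut_comp: "tree_aut g \<Longrightarrow> tree_aut h \<Longrightarrow> tree_aut (h \<circ> g)"
  unfolding tree_aut_def
proof (intro conjI allI)
  assume g: "bij g \<and> (\<forall>u. length (g u) = length u) \<and> (\<forall>u v. take (length u) (g (u @ v)) = g u)"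
    and h: "bij h \<and> (\<forall>u. length (h u) = length u) \<and> (\<forall>u v. take (length u) (h (u @ v)) = h u)"
  show "bij (h \<circ> g)" using g h bij_comp by blast
  fix u show "length ((h \<circ> g) u) = length u" using g h by simp
  fix v
  have e: "g (u @ v) = g u @ drop (length u) (g (u@v))"
    using g by (metis append_take_drop_id)
  have "take (length (g u)) (h (g u @ drop (length u) (g (u@v)))) = h (g u)" using h by blast
  then show "take (length u) ((h \<circ> g) (u @ v)) = (h \<circ> g) u" using g e by (metis comp_apply)
qed

lemma tree_aut_inv: "tree_aut g \<Longrightarrow> tree_aut (Hilbert_Choice.inv g)"
  unfolding tree_aut_def
proof (intro conjI allI)
  assume g: "bij g \<and> (\<forall>u. length (g u) = length u) \<and> (\<forall>u v. take (length u) (g (u @ v)) = g u)"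
  show "bij (Hilbert_Choice.inv g)" using g bij_imp_bij_inv by blast
  fix u show "length (Hilbert_Choice.inv g u) = length u" using g by (metis bij_inv_eq_iff)
  fix v
  define w where "w = Hilbert_Choice.inv g (u@v)"
  have gw: "g w = u @ v" using g unfolding w_def by (meson bij_inv_eq_iff)
  have lw: "length w = length u + length v" using g gw by (metis length_append)
  have "g (take (length u) w) = take (length (take (length u) w)) (g (take (length u) w @ drop (length u) w))"
    using g by metis
  also have "\<dots> = u" using gw lw by simp
  finally show "take (length u) (Hilbert_Choice.inv g (u @ v)) = Hilbert_Choice.inv g u" unfolding w_def[symmetric]
    using g by (metis bij_inv_eq_iff)
qed

lemma tree_aut_id: "tree_aut id"
  unfolding tree_aut_def by simp

lemma group_AutT: "group AutT"
proof (rule groupI)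
  show "\<And>x y. x \<in> carrier AutT \<Longrightarrow> y \<in> carrier AutT \<Longrightarrow> x \<otimes>\<^bsub>AutT\<^esub> y \<in> carrier AutT"
    by (simp add: AutT_def tree_aut_comp)
  show "\<one>\<^bsub>AutT\<^esub> \<in> carrier AutT" by (simp add: AutT_def tree_aut_id)
  show "\<And>x y z. x \<in> carrier AutT \<Longrightarrow> y \<in> carrier AutT \<Longrightarrow> z \<in> carrier AutT \<Longrightarrow>
    x \<otimes>\<^bsub>AutT\<^esub> y \<otimes>\<^bsub>AutT\<^esub> z = x \<otimes>\<^bsub>AutT\<^esub> (y \<otimes>\<^bsub>AutT\<^esub> z)"
    by (simp add: AutT_def comp_assoc)
  show "\<And>x. x \<in> carrier AutT \<Longrightarrow> \<one>\<^bsub>AutT\<^esub> \<otimes>\<^bsub>AutT\<^esub> x = x" by (simp add: AutT_def)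
  fix x assume "x \<in> carrier AutT"
  then have tx: "tree_aut x" by (simp add: AutT_def)
  then have "surj x" unfolding tree_aut_def using bij_is_surj by blast
  then have "x \<circ> Hilbert_Choice.inv x = id" unfolding surj_iff .
  then show "\<exists>y\<in>carrier AutT. y \<otimes>\<^bsub>AutT\<^esub> x = \<one>\<^bsub>AutT\<^esub>"
    using tx tree_aut_inv by (intro bexI[of _ "Hilbert_Choice.inv x"]) (auto simp: AutT_def)
qed

interpretation A: group AutT by (rule group_AutT)

lemma AutT_mult: "g \<otimes>\<^bsub>AutT\<^esub> h = h \<circ> g" by (simp add: AutT_def)
lemma AutT_one: "\<one>\<^bsub>AutT\<^esub> = id" by (simp add: AutT_def)
lemma AutT_carrier: "carrier AutT = {g. tree_aut g}" by (simp add: AutT_def)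

lemma AutT_inv: assumes "tree_aut g" shows "inv\<^bsub>AutT\<^esub> g = Hilbert_Choice.inv g"
proof -
  have c1: "g \<in> carrier AutT" using assms by (simp add: AutT_carrier)
  have c2: "Hilbert_Choice.inv g \<in> carrier AutT" using assms tree_aut_inv by (simp add: AutT_carrier)
  have c3: "Hilbert_Choice.inv g \<otimes>\<^bsub>AutT\<^esub> g = \<one>\<^bsub>AutT\<^esub>"
  proof -
    have "surj g" using assms unfolding tree_aut_def using bij_is_surj by blast
    then show ?thesis unfolding AutT_mult AutT_one surj_iff .
  qed
  show ?thesis using A.inv_equality[OF c3 c1 c2] .
qed

lemma St1_cons: assumes "b \<in> St1" shows "b (y # v) = y # sect b [y] v"
proof -
  have t: "tree_aut b" "b [y] = [y]" using assms by (auto simp: St1_def)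
  have "take (length [y]) (b ([y] @ v)) = b [y]" using t(1) unfolding tree_aut_def by blast
  then have tk: "take 1 (b (y # v)) = [y]" using t(2) by simp
  have "b (y # v) = take 1 (b (y # v)) @ drop 1 (b (y # v))" by simp
  also have "\<dots> = y # drop 1 (b (y # v))" using tk by simp
  finally show ?thesis unfolding sect_def by simp
qed

lemma sect_mult: assumes "b1 \<in> St1" "b2 \<in> St1"
  shows "sect (b1 \<otimes>\<^bsub>AutT\<^esub> b2) [y] = sect b1 [y] \<otimes>\<^bsub>AutT\<^esub> sect b2 [y]"
proof -
  have e: "(b2 \<circ> b1) (y # v) = y # sect b2 [y] (sect b1 [y] v)" for v
    using St1_cons[OF assms(1)] St1_cons[OF assms(2)] by (simp only: comp_apply)
  have "sect (b2 \<circ> b1) [y] v = sect b2 [y] (sect b1 [y] v)" for v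
  proof -
    have "sect (b2 \<circ> b1) [y] v = drop 1 ((b2 \<circ> b1) (y # v))" unfolding sect_def by simp
    also have "\<dots> = sect b2 [y] (sect b1 [y] v)" unfolding e by simp
    finally show ?thesis .
  qed
  then show ?thesis unfolding AutT_mult by (simp add: fun_eq_iff)
qed

lemma sect_one: "sect \<one>\<^bsub>AutT\<^esub> [y] = \<one>\<^bsub>AutT\<^esub>"
  by (auto simp: AutT_one sect_def fun_eq_iff)

lemma sect_inv: assumes "b \<in> St1" "tree_aut (sect b [y])"
  shows "sect (inv\<^bsub>AutT\<^esub> b) [y] = inv\<^bsub>AutT\<^esub> (sect b [y])"
proof -
  have tb: "tree_aut b" using assms by (simp add: St1_def)
  have bb: "bij b" using tb by (simp add: tree_aut_def)
  have bs: "bij (sect b [y])" using assms(2) by (simp add: tree_aut_def)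
  have h1: "\<And>v. b (y # Hilbert_Choice.inv (sect b [y]) v) = y # v"
  proof -
    fix v
    have "b (y # Hilbert_Choice.inv (sect b [y]) v) = y # sect b [y] (Hilbert_Choice.inv (sect b [y]) v)"
      by (rule St1_cons[OF assms(1)])
    also have "\<dots> = y # v" using bs by (simp add: surj_f_inv_f bij_is_surj)
    finally show "b (y # Hilbert_Choice.inv (sect b [y]) v) = y # v" .
  qed
  have h2: "Hilbert_Choice.inv b (y # v) = y # Hilbert_Choice.inv (sect b [y]) v" for v
  proof -
    have "Hilbert_Choice.inv b (b (y # Hilbert_Choice.inv (sect b [y]) v)) = y # Hilbert_Choice.inv (sect b [y]) v"
      by (rule inv_f_f[OF bij_is_inj[OF bb]])
    then show ?thesis unfolding h1 .
  qed
  have "sect (Hilbert_Choice.inv b) [y] v = Hilbert_Choice.inv (sect b [y]) v" for v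
  proof -
    have "sect (Hilbert_Choice.inv b) [y] v = drop 1 (Hilbert_Choice.inv b (y # v))" unfolding sect_def by simp
    also have "\<dots> = Hilbert_Choice.inv (sect b [y]) v" unfolding h2 by simp
    finally show ?thesis .
  qed
  then show ?thesis unfolding AutT_inv[OF tb] AutT_inv[OF assms(2)] by (simp add: fun_eq_iff)
qed


lemma lact_id: "lact x id = x" by (simp add: lact_def)

lemma CS_D: assumes "CS_group x0 A B"
  shows "subgroup A AutT" "subgroup B AutT" "B \<subseteq> St1"
    "\<forall>b\<in>B. \<forall>x. x \<noteq> x0 \<longrightarrow> sect b [x] \<in> A"
    "generate AutT {sect b [x] | b x. b \<in> B \<and> x \<noteq> x0} = A"
  using assms unfolding CS_group_def apply - apply (elim conjE, assumption)+ done

lemma sect_gen: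
  assumes cs: "CS_group x0 A B" and SB: "S \<subseteq> B" and gS: "generate AutT S = B"
    and y: "y \<noteq> x0" and b: "b \<in> generate AutT S"
  shows "sect b [y] \<in> generate AutT {sect b [y] | y b. y \<in> UNIV - {x0} \<and> b \<in> S}"
  using b
proof (induction rule: generate.induct)
  case one
  show ?case unfolding sect_one by (rule generate.one)
next
  case (incl h)
  then have "sect h [y] \<in> {sect b [y] | y b. y \<in> UNIV - {x0} \<and> b \<in> S}" using y by blast
  then show ?case by (rule generate.incl)
next
  case (inv h)
  have hB: "h \<in> B" using inv SB by blast
  have hS: "h \<in> St1" using hB CS_D(3)[OF cs] by blast
  have "sect h [y] \<in> A" using hB CS_D(4)[OF cs] y by blast
  moreover have "A \<subseteq> carrier AutT" using CS_D(1)[OF cs] subgroup.subset by blast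
  ultimately have "tree_aut (sect h [y])" by (auto simp: AutT_carrier)
  then have e: "sect (inv\<^bsub>AutT\<^esub> h) [y] = inv\<^bsub>AutT\<^esub> (sect h [y])" by (rule sect_inv[OF hS])
  have "sect h [y] \<in> {sect b [y] | y b. y \<in> UNIV - {x0} \<and> b \<in> S}" using inv y by blast
  then show ?case unfolding e by (rule generate.inv)
next
  case (eng h1 h2)
  have "h1 \<in> B" "h2 \<in> B" using eng gS by auto
  then have "h1 \<in> St1" "h2 \<in> St1" using CS_D(3)[OF cs] by blast+
  then have "sect (h1 \<otimes>\<^bsub>AutT\<^esub> h2) [y] = sect h1 [y] \<otimes>\<^bsub>AutT\<^esub> sect h2 [y]" by (rule sect_mult)
  then show ?case using generate.eng[OF eng.IH] by simp
qed

theorem mainTheorem17: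
  fixes x0 :: "'x::finite"
    and A B :: "('x list \<Rightarrow> 'x list) set"
    and a :: "'x list \<Rightarrow> 'x list"
  assumes cs: "CS_group x0 A B"
    and card2: "card (UNIV :: 'x set) \<ge> 2"
    and perfect: "derived AutT A = A"
    and aA: "a \<in> A"
    and atrans: "\<forall>x y. \<exists>n::int. lact x (a [^]\<^bsub>AutT\<^esub> n) = y"
  shows "\<not> orbitwise_abelian x0 A B \<and>
    (\<forall>S. S \<subseteq> B \<and> generate AutT S = B \<longrightarrow>
        \<not> eventually_trivial x0 A S \<and>
        A \<subseteq> sigmaS x0 A S a x0 \<and>
        (\<forall>k\<ge>1. a \<in> (SigmaS x0 A S ^^ k) {a}))"
proof -
  have subA: "subgroup A AutT" and subB: "subgroup B AutT" and BSt: "B \<subseteq> St1"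
    and sectA: "\<forall>b\<in>B. \<forall>x. x \<noteq> x0 \<longrightarrow> sect b [x] \<in> A"
    and genA: "generate AutT {sect b [x] | b x. b \<in> B \<and> x \<noteq> x0} = A"
    using CS_D[OF cs] by auto
  have Acar: "A \<subseteq> carrier AutT" using subA subgroup.subset by blast
  have acar: "a \<in> carrier AutT" using aA Acar by blast
  obtain y where y: "y \<noteq> x0"
  proof -
    have "UNIV \<noteq> {x0}"
    proof
      assume u: "UNIV = {x0}"
      have "card (UNIV :: 'x set) = 1" unfolding u by simp
      then show False using card2 by simp
    qed
    then show ?thesis using that by blast
  qed
  have a1: "a \<noteq> \<one>\<^bsub>AutT\<^esub>"
  proof
    assume "a = \<one>\<^bsub>AutT\<^esub>"
    obtain n :: int where n: "lact x0 (a [^]\<^bsub>AutT\<^esub> n) = y" using atrans by blast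
    have "a [^]\<^bsub>AutT\<^esub> n = \<one>\<^bsub>AutT\<^esub>" unfolding \<open>a = \<one>\<^bsub>AutT\<^esub>\<close> by (rule A.int_pow_one)
    then have "a [^]\<^bsub>AutT\<^esub> n = id" by (simp add: AutT_one)
    then have "lact x0 id = y" using n by simp
    then show False using y unfolding lact_id by simp
  qed
  have oneA: "\<one>\<^bsub>AutT\<^esub> \<in> A" using subA subgroup.one_closed by blast
  have part1: "\<not> orbitwise_abelian x0 A B"
  proof
    assume oa: "orbitwise_abelian x0 A B"
    define K where "K = generate AutT {sect b [lact x0 c] | b c.
                  c \<in> generate AutT {a} - stA x0 A \<and> b \<in> B}"
    have comm: "\<forall>g\<in>K. \<forall>h\<in>K. g \<otimes>\<^bsub>AutT\<^esub> h = h \<otimes>\<^bsub>AutT\<^esub> g"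
      using bspec[OF oa[unfolded orbitwise_abelian_def] aA] unfolding K_def Let_def .
    have gena: "generate AutT {a} = {a [^]\<^bsub>AutT\<^esub> (k::int) | k. k \<in> UNIV}"
      using A.generate_pow[OF acar] .
    have genaA: "generate AutT {a} \<subseteq> A" unfolding gena using A.subgroup_int_pow_closed[OF subA aA] by auto
    have "{sect b [lact x0 c] | b c. c \<in> generate AutT {a} - stA x0 A \<and> b \<in> B}
        = {sect b [x] | b x. b \<in> B \<and> x \<noteq> x0}"
    proof (intro equalityI subsetI)
      fix g assume "g \<in> {sect b [lact x0 c] | b c. c \<in> generate AutT {a} - stA x0 A \<and> b \<in> B}"
      then obtain b c where "g = sect b [lact x0 c]" "c \<in> generate AutT {a}" "c \<notin> stA x0 A" "b \<in> B" by blast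
      moreover then have "lact x0 c \<noteq> x0" using genaA by (auto simp: stA_def)
      ultimately show "g \<in> {sect b [x] | b x. b \<in> B \<and> x \<noteq> x0}" by blast
    next
      fix g assume "g \<in> {sect b [x] | b x. b \<in> B \<and> x \<noteq> x0}"
      then obtain b x where g: "g = sect b [x]" "b \<in> B" "x \<noteq> x0" by blast
      obtain n :: int where n: "lact x0 (a [^]\<^bsub>AutT\<^esub> n) = x" using atrans by blast
      have "a [^]\<^bsub>AutT\<^esub> n \<in> generate AutT {a}" using gena by blast
      moreover then have "a [^]\<^bsub>AutT\<^esub> n \<notin> stA x0 A" using n g by (auto simp: stA_def)
      ultimately show "g \<in> {sect b [lact x0 c] | b c. c \<in> generate AutT {a} - stA x0 A \<and> b \<in> B}"
        using g n by blast
    qed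
    then have KA: "K = A" using genA K_def by simp
    have "derived_set AutT A \<subseteq> {\<one>\<^bsub>AutT\<^esub>}"
    proof (intro subsetI)
      fix g assume "g \<in> derived_set AutT A"
      then obtain h1 h2 where h: "h1 \<in> A" "h2 \<in> A"
        "g = h1 \<otimes>\<^bsub>AutT\<^esub> h2 \<otimes>\<^bsub>AutT\<^esub> inv\<^bsub>AutT\<^esub> h1 \<otimes>\<^bsub>AutT\<^esub> inv\<^bsub>AutT\<^esub> h2" by blast
      have c: "h1 \<in> carrier AutT" "h2 \<in> carrier AutT" using h Acar by auto
      have hc: "h1 \<otimes>\<^bsub>AutT\<^esub> h2 = h2 \<otimes>\<^bsub>AutT\<^esub> h1"
        using comm h(1,2) unfolding KA by blast
      have "g = h2 \<otimes>\<^bsub>AutT\<^esub> (h1 \<otimes>\<^bsub>AutT\<^esub> inv\<^bsub>AutT\<^esub> h1) \<otimes>\<^bsub>AutT\<^esub> inv\<^bsub>AutT\<^esub> h2"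
        unfolding h(3) hc using c by (simp add: A.m_assoc)
      also have "\<dots> = \<one>\<^bsub>AutT\<^esub>" using c by simp
      finally show "g \<in> {\<one>\<^bsub>AutT\<^esub>}" by simp
    qed
    then have "derived AutT A \<subseteq> {\<one>\<^bsub>AutT\<^esub>}"
      unfolding derived_def using A.generate_subgroup_incl[OF _ A.triv_subgroup] by blast
    then show False using perfect aA a1 by blast
  qed
  have part2: "\<not> eventually_trivial x0 A S \<and> A \<subseteq> sigmaS x0 A S a x0 \<and>
        (\<forall>k\<ge>1. a \<in> (SigmaS x0 A S ^^ k) {a})" if S: "S \<subseteq> B" "generate AutT S = B" for S
  proof -
    have Xs: "Xset x0 A a x0 = UNIV - {x0}"
    proof (intro equalityI subsetI)
      fix x assume "x \<in> Xset x0 A a x0" then show "x \<in> UNIV - {x0}" by (auto simp: Xset_def)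
    next
      fix x assume x: "x \<in> UNIV - {x0}"
      have "a = \<one>\<^bsub>AutT\<^esub> \<otimes>\<^bsub>AutT\<^esub> a \<otimes>\<^bsub>AutT\<^esub> inv\<^bsub>AutT\<^esub> \<one>\<^bsub>AutT\<^esub>"
        using acar by simp
      moreover have "\<one>\<^bsub>AutT\<^esub> \<in> mpA x0 A x0" using oneA by (simp add: mpA_def AutT_one lact_id)
      ultimately have "a \<in> Cset x0 A a x0" unfolding Cset_def by blast
      moreover obtain n :: int where n: "lact x0 (a [^]\<^bsub>AutT\<^esub> n) = x" using atrans by blast
      moreover have "x \<in> orb a x0" unfolding orb_def using n by (intro CollectI exI[of _ n] conjI) auto
      ultimately show "x \<in> Xset x0 A a x0" using x unfolding Xset_def by blast
    qed
    define T where "T = {sect b [y] | y b. y \<in> UNIV - {x0} \<and> b \<in> S}"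
    have HS: "HS x0 A S a x0 = generate AutT T" unfolding HS_def T_def Xs ..
    have TA: "T \<subseteq> A" using S sectA unfolding T_def by blast
    have Tc: "T \<subseteq> carrier AutT" using TA Acar by blast
    have "generate AutT T = A"
    proof
      show "generate AutT T \<subseteq> A" using A.generate_subgroup_incl[OF TA subA] .
      have "{sect b [x] | b x. b \<in> B \<and> x \<noteq> x0} \<subseteq> generate AutT T"
        using sect_gen[OF cs S(1) S(2)] S(2) unfolding T_def by blast
      then show "A \<subseteq> generate AutT T"
        using A.generate_subgroup_incl[OF _ A.generate_is_subgroup[OF Tc]] genA by blast
    qed
    then have dH: "derived AutT (HS x0 A S a x0) = A" using HS perfect by simp
    have Asig: "A \<subseteq> sigmaS x0 A S a x0"
    proof
      fix g assume g: "g \<in> A"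
      have "\<one>\<^bsub>AutT\<^esub> \<in> generate AutT {orbprod x0 c b | c b. c \<in> Cset x0 A a x0 \<and> b \<in> S}"
        by (rule generate.one)
      moreover have "g = \<one>\<^bsub>AutT\<^esub> \<otimes>\<^bsub>AutT\<^esub> g" using g Acar by auto
      ultimately show "g \<in> sigmaS x0 A S a x0" unfolding sigmaS_def dH set_mult_def using g by blast
    qed
    have ak: "a \<in> (SigmaS x0 A S ^^ k) {a}" for k
    proof (induction k)
      case 0 then show ?case by simp
    next
      case (Suc k)
      have "a \<in> sigmaS x0 A S a x0" using Asig aA by blast
      then show ?case using Suc unfolding SigmaS_def by auto
    qed
    have "\<not> eventually_trivial x0 A S"
    proof
      assume "eventually_trivial x0 A S"
      then obtain n where "\<forall>m>n. (SigmaS x0 A S ^^ m) {a} \<subseteq> {\<one>\<^bsub>AutT\<^esub>}"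
        using aA unfolding eventually_trivial_def by blast
      then have "(SigmaS x0 A S ^^ Suc n) {a} \<subseteq> {\<one>\<^bsub>AutT\<^esub>}" by blast
      then show False using ak a1 by blast
    qed
    then show ?thesis using Asig ak by blast
  qed
  show ?thesis using part1 part2 by blast
qed

end
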